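(* For every $l\ge1$, the Christoffel–Darboux kernel $K^{[l]}(x,y):=\sum_{k=0}^{l-1}Q^{(k)}(y)\bar Q^{(k)}(x)$ satisfies $$K^{[l]}(x,y)=\big(\xi_2^{[l]}(x)\big)^\top(g^{[l]})^{-1}\xi_1^{[l]}(y).$$
   Context: Setting: $\mu$ finite Borel measure on an interval, weights $w_{1,a}$ ($a\le p_1$), $w_{2,b}$ ($b\le p_2$), compositions $\vec n_\ell\in\mathbb N^{p_\ell}$; each $i\in\mathbb Z_+$ is uniquely $i=q|\vec n_\ell|+n_{\ell,1}+\dots+n_{\ell,a-1}+r$ ($0\le r<n_{\ell,a}$), $a_\ell(i)=a$, $k_\ell(i)=qn_{\ell,a}+r$. $\xi_\ell(x)$ is the semi-infinite vector with $i$-th entry $w_{\ell,a_\ell(i)}(x)x^{k_\ell(i)}$, $\xi_\ell^{[l]}$ its first $l$ entries. Moment matrix $g=\int\xi_1\xi_2^\top d\mu$, $g^{[l]}=(g_{i,j})_{0\le i,j<l}$, with Gauss–Borel factorization $g=S^{-1}\bar S$ ($S$ unit lower triangular, $\bar S$ upper triangular invertible). Linear forms $Q=S\xi_1$, $\bar Q=(\bar S^{-1})^\top\xi_2$ with entries $Q^{(k)},\bar Q^{(k)}$. *)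

theory Defs
  imports "HOL-Analysis.Analysis" "Jordan_Normal_Form.Gauss_Jordan_Elimination"
begin

text \<open>A composition is a list of positive naturals
  (entries n_1,...,n_p); components are indexed from 0 (so a = 0..p-1 here
  corresponds to a = 1..p in the paper). Writing i = q |n| + n_1+...+n_(a-1) + r
  with 0 <= r < n_a, we have comp_a n i = a (0-based) and comp_k n i = q n_a + r.\<close>

definition is_composition :: "nat list \<Rightarrow> bool" where
  "is_composition n \<longleftrightarrow> n \<noteq> [] \<and> (\<forall>m\<in>set n. 0 < m)"

definition comp_a :: "nat list \<Rightarrow> nat \<Rightarrow> nat" where
  "comp_a n i = (LEAST a. i mod sum_list n < sum_list (take (Suc a) n))"

definition comp_k :: "nat list \<Rightarrow> nat \<Rightarrow> nat" where
  "comp_k n i = (i div sum_list n) * (n ! comp_a n i)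
      + (i mod sum_list n - sum_list (take (comp_a n i) n))"

definition xi :: "nat list \<Rightarrow> (nat \<Rightarrow> real \<Rightarrow> real) \<Rightarrow> nat \<Rightarrow> real \<Rightarrow> real" where
  "xi n w i x = w (comp_a n i) x * x ^ comp_k n i"

definition moment :: "real measure \<Rightarrow> nat list \<Rightarrow> (nat \<Rightarrow> real \<Rightarrow> real)
    \<Rightarrow> nat list \<Rightarrow> (nat \<Rightarrow> real \<Rightarrow> real) \<Rightarrow> nat \<Rightarrow> nat \<Rightarrow> real" where
  "moment M n1 w1 n2 w2 i j = (\<integral>x. xi n1 w1 i x * xi n2 w2 j x \<partial>M)"

text \<open>Semi-infinite matrices are functions nat => nat => real.\<close>
definition lower_unitriangular :: "(nat \<Rightarrow> nat \<Rightarrow> real) \<Rightarrow> bool" where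
  "lower_unitriangular S \<longleftrightarrow> (\<forall>i. S i i = 1) \<and> (\<forall>i j. i < j \<longrightarrow> S i j = 0)"

definition upper_triangular_invertible :: "(nat \<Rightarrow> nat \<Rightarrow> real) \<Rightarrow> bool" where
  "upper_triangular_invertible U \<longleftrightarrow> (\<forall>i. U i i \<noteq> 0) \<and> (\<forall>i j. j < i \<longrightarrow> U i j = 0)"

text \<open>Gauss-Borel factorization g = S^{-1} Sb, expressed equivalently as S g = Sb
  (the product S g only involves finite sums since S is lower triangular).\<close>
definition gauss_borel :: "(nat \<Rightarrow> nat \<Rightarrow> real) \<Rightarrow> (nat \<Rightarrow> nat \<Rightarrow> real)
    \<Rightarrow> (nat \<Rightarrow> nat \<Rightarrow> real) \<Rightarrow> bool" where
  "gauss_borel g S Sb \<longleftrightarrow> lower_unitriangular S \<and> upper_triangular_invertible Sb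
     \<and> (\<forall>i j. (\<Sum>k\<le>i. S i k * g k j) = Sb i j)"

definition upper_tri_inverse :: "(nat \<Rightarrow> nat \<Rightarrow> real) \<Rightarrow> nat \<Rightarrow> nat \<Rightarrow> real" where
  "upper_tri_inverse U = (THE T. (\<forall>i j. j < i \<longrightarrow> T i j = 0) \<and>
      (\<forall>i j. i \<le> j \<longrightarrow> (\<Sum>k\<in>{i..j}. U i k * T k j) = (if i = j then 1 else 0)))"

definition Qform :: "(nat \<Rightarrow> nat \<Rightarrow> real) \<Rightarrow> (nat \<Rightarrow> real \<Rightarrow> real) \<Rightarrow> nat \<Rightarrow> real \<Rightarrow> real" where
  "Qform S \<xi> k x = (\<Sum>j\<le>k. S k j * \<xi> j x)"

definition Qbar_form :: "(nat \<Rightarrow> nat \<Rightarrow> real) \<Rightarrow> (nat \<Rightarrow> real \<Rightarrow> real) \<Rightarrow> nat \<Rightarrow> real \<Rightarrow> real" where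
  "Qbar_form Sb \<xi> k x = (\<Sum>j\<le>k. upper_tri_inverse Sb j k * \<xi> j x)"

definition CD_kernel :: "nat \<Rightarrow> (nat \<Rightarrow> real \<Rightarrow> real) \<Rightarrow> (nat \<Rightarrow> real \<Rightarrow> real) \<Rightarrow> real \<Rightarrow> real \<Rightarrow> real" where
  "CD_kernel l Q Qb x y = (\<Sum>k<l. Q k y * Qb k x)"

definition trunc_mat :: "nat \<Rightarrow> (nat \<Rightarrow> nat \<Rightarrow> real) \<Rightarrow> real mat" where
  "trunc_mat l g = mat l l (\<lambda>(i, j). g i j)"

definition trunc_vec :: "nat \<Rightarrow> (nat \<Rightarrow> real \<Rightarrow> real) \<Rightarrow> real \<Rightarrow> real Matrix.vec" where
  "trunc_vec l \<xi> x = Matrix.vec l (\<lambda>i. \<xi> i x)"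

end

theory Submission
  imports Defs "Jordan_Normal_Form.Determinant"
begin

lemma tri_prod:
  fixes U T :: "nat \<Rightarrow> nat \<Rightarrow> real"
  assumes U: "\<And>i j. j < i \<Longrightarrow> U i j = 0"
    and T: "\<And>i j. j < i \<Longrightarrow> T i j = 0"
    and eqs: "\<And>i j. i \<le> j \<Longrightarrow> (\<Sum>k\<in>{i..j}. U i k * T k j) = (if i = j then 1 else 0)"
  shows "mat N N (\<lambda>(i,j). U i j) * mat N N (\<lambda>(i,j). T i j) = 1\<^sub>m N"
proof (rule eq_matI)
  fix i j assume i: "i < dim_row (1\<^sub>m N :: real mat)" and j: "j < dim_col (1\<^sub>m N :: real mat)"
  hence iN: "i < N" and jN: "j < N" by auto
  have "(mat N N (\<lambda>(i,j). U i j) * mat N N (\<lambda>(i,j). T i j)) $$ (i,j) = (\<Sum>k<N. U i k * T k j)"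
    using iN jN by (simp add: scalar_prod_def lessThan_atLeast0)
  also have "\<dots> = (if i = j then 1 else 0)"
  proof (cases "i \<le> j")
    case True
    have "(\<Sum>k<N. U i k * T k j) = (\<Sum>k\<in>{i..j}. U i k * T k j)"
    proof (rule sum.mono_neutral_right)
      show "{i..j} \<subseteq> {..<N}" using jN by auto
      show "\<forall>k\<in>{..<N} - {i..j}. U i k * T k j = 0" using U T by fastforce
    qed auto
    then show ?thesis using eqs[OF True] by simp
  next
    case False
    have "(\<Sum>k<N. U i k * T k j) = 0"
      by (rule sum.neutral) (metis False T U le_less_trans linorder_not_le mult_eq_0_iff)
    then show ?thesis using False by simp
  qed
  also have "\<dots> = 1\<^sub>m N $$ (i,j)" using iN jN by simp
  finally show "(mat N N (\<lambda>(i,j). U i j) * mat N N (\<lambda>(i,j). T i j)) $$ (i,j) = 1\<^sub>m N $$ (i,j)" .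
qed auto

lemma upper_unit:
  fixes U :: "nat \<Rightarrow> nat \<Rightarrow> real"
  assumes "upper_triangular_invertible U"
  shows "\<exists>C \<in> carrier_mat N N. mat N N (\<lambda>(i,j). U i j) * C = 1\<^sub>m N"
proof -
  let ?B = "mat N N (\<lambda>(i,j). U i j)"
  have B: "?B \<in> carrier_mat N N" by simp
  have ut: "upper_triangular ?B" using assms
    unfolding upper_triangular_def upper_triangular_invertible_def by auto
  have "Determinant.det ?B = prod_list (diag_mat ?B)" by (rule det_upper_triangular[OF ut B])
  also have "\<dots> \<noteq> 0" using assms
    unfolding upper_triangular_invertible_def diag_mat_def
    by (auto simp: prod_list_zero_iff)
  finally have "?B \<in> Units (ring_mat TYPE(real) N undefined)"
    using det_non_zero_imp_unit[OF B] by auto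
  then show ?thesis unfolding Units_def ring_mat_def by auto
qed

definition tri_prop :: "(nat \<Rightarrow> nat \<Rightarrow> real) \<Rightarrow> (nat \<Rightarrow> nat \<Rightarrow> real) \<Rightarrow> bool" where
  "tri_prop U T \<longleftrightarrow> (\<forall>i j. j < i \<longrightarrow> T i j = 0) \<and>
      (\<forall>i j. i \<le> j \<longrightarrow> (\<Sum>k\<in>{i..j}. U i k * T k j) = (if i = j then 1 else 0))"

lemma tri_exists:
  fixes U :: "nat \<Rightarrow> nat \<Rightarrow> real"
  assumes "upper_triangular_invertible U"
  shows "\<exists>T. tri_prop U T"
proof -
  have "\<forall>j. \<exists>C. C \<in> carrier_mat (Suc j) (Suc j) \<and> mat (Suc j) (Suc j) (\<lambda>(i,j). U i j) * C = 1\<^sub>m (Suc j)"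
    using upper_unit[OF assms] by blast
  then obtain C where C: "\<And>j. C j \<in> carrier_mat (Suc j) (Suc j)"
    "\<And>j. mat (Suc j) (Suc j) (\<lambda>(i,j). U i j) * C j = 1\<^sub>m (Suc j)" by metis
  define T where "T i j = (if i \<le> j then C j $$ (i,j) else 0)" for i j
  have Uz: "\<And>i j. j < i \<Longrightarrow> U i j = 0" using assms unfolding upper_triangular_invertible_def by auto
  have "tri_prop U T" unfolding tri_prop_def
  proof (intro conjI allI impI)
    fix i j :: nat assume "j < i" then show "T i j = 0" unfolding T_def by simp
  next
    fix i j :: nat assume ij: "i \<le> j"
    have "(\<Sum>k\<in>{i..j}. U i k * T k j) = (\<Sum>k\<in>{i..j}. U i k * C j $$ (k,j))"
      unfolding T_def by (rule sum.cong) auto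
    also have "\<dots> = (\<Sum>k<Suc j. U i k * C j $$ (k,j))"
    proof (rule sum.mono_neutral_left)
      show "\<forall>k\<in>{..<Suc j} - {i..j}. U i k * C j $$ (k,j) = 0" using Uz by auto
    qed auto
    also have "\<dots> = (mat (Suc j) (Suc j) (\<lambda>(i,j). U i j) * C j) $$ (i,j)"
      using C(1)[of j] ij by (simp add: scalar_prod_def lessThan_atLeast0)
    also have "\<dots> = (if i = j then 1 else 0)" unfolding C(2) using ij by simp
    finally show "(\<Sum>k\<in>{i..j}. U i k * T k j) = (if i = j then 1 else 0)" .
  qed
  then show ?thesis by blast
qed

lemma tri_unique:
  fixes U :: "nat \<Rightarrow> nat \<Rightarrow> real"
  assumes "upper_triangular_invertible U" and "tri_prop U T1" and "tri_prop U T2"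
  shows "T1 = T2"
proof (intro ext)
  fix i j
  let ?N = "Suc (max i j)"
  let ?B = "mat ?N ?N (\<lambda>(i,j). U i j)"
  let ?T1 = "mat ?N ?N (\<lambda>(i,j). T1 i j)"
  let ?T2 = "mat ?N ?N (\<lambda>(i,j). T2 i j)"
  have Uz: "\<And>i j. j < i \<Longrightarrow> U i j = 0" using assms unfolding upper_triangular_invertible_def by auto
  have b1: "?B * ?T1 = 1\<^sub>m ?N" by (rule tri_prod) (use Uz assms(2) in \<open>auto simp: tri_prop_def\<close>)
  have b2: "?B * ?T2 = 1\<^sub>m ?N" by (rule tri_prod) (use Uz assms(3) in \<open>auto simp: tri_prop_def\<close>)
  have c: "?T1 * ?B = 1\<^sub>m ?N" by (rule mat_mult_left_right_inverse[OF _ _ b1]) auto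
  have "?T1 = ?T1 * (?B * ?T2)" using b2 by simp
  also have "\<dots> = (?T1 * ?B) * ?T2" by (rule assoc_mult_mat[symmetric]) auto
  also have "\<dots> = ?T2" using c by simp
  finally have "?T1 $$ (i,j) = ?T2 $$ (i,j)" by simp
  then show "T1 i j = T2 i j" by simp
qed

lemma upper_tri_inverse_prop:
  assumes "upper_triangular_invertible U"
  shows "tri_prop U (upper_tri_inverse U)"
proof -
  have "\<exists>!T. tri_prop U T" using tri_exists[OF assms] tri_unique[OF assms] by blast
  from theI'[OF this] show ?thesis unfolding upper_tri_inverse_def tri_prop_def by simp
qed

theorem corollary2p2:
  fixes M :: "real measure" and I :: "real set"
    and n1 n2 :: "nat list" and w1 w2 :: "nat \<Rightarrow> real \<Rightarrow> real"
    and S Sb :: "nat \<Rightarrow> nat \<Rightarrow> real" and l :: nat and x y :: real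
  assumes "finite_measure M" and "sets M = sets borel"
    and "is_interval I" and "emeasure M (- I) = 0"
    and "is_composition n1" and "is_composition n2"
    and "\<And>i j. integrable M (\<lambda>t. xi n1 w1 i t * xi n2 w2 j t)"
    and "gauss_borel (moment M n1 w1 n2 w2) S Sb"
    and "l \<ge> 1"
  shows "CD_kernel l (Qform S (xi n1 w1)) (Qbar_form Sb (xi n2 w2)) x y
       = trunc_vec l (xi n2 w2) x \<bullet>
           (the (mat_inverse (trunc_mat l (moment M n1 w1 n2 w2))) *\<^sub>v trunc_vec l (xi n1 w1) y)"
proof -
  define g where "g = moment M n1 w1 n2 w2"
  define T where "T = upper_tri_inverse Sb"
  have gb: "gauss_borel g S Sb" using assms(8) g_def by simp
  have Sb: "upper_triangular_invertible Sb" using gb unfolding gauss_borel_def by auto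
  have Sl: "lower_unitriangular S" using gb unfolding gauss_borel_def by auto
  have Sz: "\<And>i j. i < j \<Longrightarrow> S i j = 0" using Sl unfolding lower_unitriangular_def by auto
  have Sbz: "\<And>i j. j < i \<Longrightarrow> Sb i j = 0" using Sb unfolding upper_triangular_invertible_def by auto
  have tp: "tri_prop Sb T" using upper_tri_inverse_prop[OF Sb] T_def by simp
  have Tz: "\<And>i j. j < i \<Longrightarrow> T i j = 0" using tp unfolding tri_prop_def by auto
  define SM where "SM = mat l l (\<lambda>(i,j). S i j)"
  define BM where "BM = mat l l (\<lambda>(i,j). Sb i j)"
  define TM where "TM = mat l l (\<lambda>(i,j). T i j)"
  define G where "G = trunc_mat l g"
  have carr: "SM \<in> carrier_mat l l" "BM \<in> carrier_mat l l" "TM \<in> carrier_mat l l" "G \<in> carrier_mat l l"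
    unfolding SM_def BM_def TM_def G_def trunc_mat_def by auto
  have SG: "SM * G = BM"
  proof (rule eq_matI)
    fix i j assume "i < dim_row BM" "j < dim_col BM"
    hence i: "i < l" and j: "j < l" unfolding BM_def by auto
    have "(SM * G) $$ (i,j) = (\<Sum>k<l. S i k * g k j)"
      using i j unfolding SM_def G_def trunc_mat_def by (simp add: scalar_prod_def lessThan_atLeast0)
    also have "\<dots> = (\<Sum>k\<le>i. S i k * g k j)"
    proof (rule sum.mono_neutral_right)
      show "\<forall>k\<in>{..<l} - {..i}. S i k * g k j = 0" using Sz by auto
    qed (use i in auto)
    also have "\<dots> = Sb i j" using gb unfolding gauss_borel_def by auto
    finally show "(SM * G) $$ (i,j) = BM $$ (i,j)" using i j unfolding BM_def by simp
  qed (auto simp: SM_def BM_def G_def trunc_mat_def)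
  have BT: "BM * TM = 1\<^sub>m l" unfolding BM_def TM_def
    by (rule tri_prod) (use Sbz tp in \<open>auto simp: tri_prop_def\<close>)
  have TB: "TM * BM = 1\<^sub>m l" by (rule mat_mult_left_right_inverse[OF carr(2) carr(3) BT])
  have "(TM * SM) * G = TM * (SM * G)" using carr by (simp add: assoc_mult_mat)
  also have "\<dots> = 1\<^sub>m l" using SG TB by simp
  finally have TSG: "(TM * SM) * G = 1\<^sub>m l" .
  have TSc: "TM * SM \<in> carrier_mat l l" using carr by auto
  have GTS: "G * (TM * SM) = 1\<^sub>m l" by (rule mat_mult_left_right_inverse[OF TSc carr(4) TSG])
  have detG: "Determinant.det G \<noteq> 0"
    using det_mult[OF carr(4) TSc] GTS by (metis det_one zero_neq_one mult_zero_left)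
  hence GU: "G \<in> Units (ring_mat TYPE(real) l undefined)" using det_non_zero_imp_unit[OF carr(4)] by auto
  obtain X where X: "mat_inverse G = Some X"
  proof (cases "mat_inverse G")
    case None
    then show ?thesis using mat_inverse(1)[OF carr(4) None, where b="()"] det_non_zero_imp_unit[OF carr(4) detG, where b="()"] by blast
  next
    case (Some a)
    then show ?thesis using that by blast
  qed
  from mat_inverse(2)[OF carr(4) X] have GX: "G * X = 1\<^sub>m l" and Xc: "X \<in> carrier_mat l l" by auto
  have "X = ((TM * SM) * G) * X" using TSG Xc by simp
  also have "\<dots> = (TM * SM) * (G * X)" using TSc carr Xc by (metis assoc_mult_mat)
  also have "\<dots> = TM * SM" unfolding GX using TSc by (rule right_mult_one_mat)
  finally have XE: "X = TM * SM" .
  define v1 where "v1 = trunc_vec l (xi n1 w1) y"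
  define v2 where "v2 = trunc_vec l (xi n2 w2) x"
  have v: "v1 \<in> carrier_vec l" "v2 \<in> carrier_vec l" unfolding v1_def v2_def trunc_vec_def by auto
  have "X *\<^sub>v v1 = TM *\<^sub>v (SM *\<^sub>v v1)" unfolding XE using carr v by (simp add: assoc_mult_mat_vec)
  hence RHS: "v2 \<bullet> (X *\<^sub>v v1) = (\<Sum>i<l. xi n2 w2 i x * (\<Sum>m<l. T i m * (\<Sum>j<l. S m j * xi n1 w1 j y)))"
    using v unfolding v1_def v2_def TM_def SM_def trunc_vec_def
    by (simp add: scalar_prod_def lessThan_atLeast0 mult.commute)
  have Q: "\<And>k. k < l \<Longrightarrow> Qform S (xi n1 w1) k y = (\<Sum>j<l. S k j * xi n1 w1 j y)"
    unfolding Qform_def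
    by (rule sum.mono_neutral_left) (use Sz in auto)
  have Qb: "\<And>k. k < l \<Longrightarrow> Qbar_form Sb (xi n2 w2) k x = (\<Sum>i<l. T i k * xi n2 w2 i x)"
    unfolding Qbar_form_def T_def[symmetric]
    by (rule sum.mono_neutral_left) (use Tz in auto)
  have "CD_kernel l (Qform S (xi n1 w1)) (Qbar_form Sb (xi n2 w2)) x y
      = (\<Sum>k<l. (\<Sum>j<l. S k j * xi n1 w1 j y) * (\<Sum>i<l. T i k * xi n2 w2 i x))"
    unfolding CD_kernel_def using Q Qb by (intro sum.cong) auto
  also have "\<dots> = (\<Sum>i<l. xi n2 w2 i x * (\<Sum>m<l. T i m * (\<Sum>j<l. S m j * xi n1 w1 j y)))"
  proof -
    define A where "A m = (\<Sum>j<l. S m j * xi n1 w1 j y)" for m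
    define b where "b i = xi n2 w2 i x" for i
    have "(\<Sum>k<l. A k * (\<Sum>i<l. T i k * b i)) = (\<Sum>k<l. \<Sum>i<l. b i * (T i k * A k))"
      by (simp add: sum_distrib_left mult_ac)
    also have "\<dots> = (\<Sum>i<l. \<Sum>k<l. b i * (T i k * A k))" by (rule sum.swap)
    also have "\<dots> = (\<Sum>i<l. b i * (\<Sum>m<l. T i m * A m))" by (simp add: sum_distrib_left)
    finally show ?thesis unfolding A_def b_def .
  qed
  finally show ?thesis using RHS X unfolding g_def G_def v1_def v2_def by simp
qed

end
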